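(* Let $(X,d)$ be a compact metric space, $\mathbb{F}=\{f_n:n\in\mathbb{N}\}$ a sequence of continuous surjective self-maps of $X$, $k\in\mathbb{N}$ and $x,y\in X$. If $\mathbb{F}$ is commutative, then: if $(x,y)$ is proximal for $(X,\mathbb{F}_k)$, then $(x,y)$ is proximal for $(X,\mathbb{F})$. Further, if $\mathbb{F}$ is commutative and each $f_i$ is bijective, then: if $(x,y)$ is proximal for $(X,\mathbb{F})$, then $(x,y)$ is proximal for $(X,\mathbb{F}_k)$.
   Context: Write $\omega_n=f_n\circ\cdots\circ f_1$ and, for $n>k$, $\omega^k_n=f_n\circ\cdots\circ f_{k+1}$; $\mathbb{F}_k=\{f_n:n\ge k+1\}$ is the truncated family. $\mathbb{F}$ is commutative if $f_i\circ f_j=f_j\circ f_i$ for all $i,j$. A pair $(x,y)$ is proximal for $(X,\mathbb{F})$ if $\liminf_{n\to\infty}d(\omega_n(x),\omega_n(y))=0$, and proximal for $(X,\mathbb{F}_k)$ if $\liminf_{n\to\infty}d(\omega^k_n(x),\omega^k_n(y))=0$. *)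

theory Defs
  imports "HOL-Analysis.Analysis" "HOL-Library.Liminf_Limsup"
begin

text \<open>The family is indexed by positive naturals: f 1, f 2, ... (the value f 0 is irrelevant).
  omega f n = f n o ... o f 1 (omega f 0 = id).\<close>
fun omega :: "(nat \<Rightarrow> 'a \<Rightarrow> 'a) \<Rightarrow> nat \<Rightarrow> 'a \<Rightarrow> 'a" where
  "omega f 0 = id"
| "omega f (Suc n) = f (Suc n) \<circ> omega f n"

fun omega_from :: "(nat \<Rightarrow> 'a \<Rightarrow> 'a) \<Rightarrow> nat \<Rightarrow> nat \<Rightarrow> 'a \<Rightarrow> 'a" where
  "omega_from f k 0 = id"
| "omega_from f k (Suc n) = (if Suc n \<le> k then id else f (Suc n) \<circ> omega_from f k n)"

definition commutative_family :: "'a set \<Rightarrow> (nat \<Rightarrow> 'a \<Rightarrow> 'a) \<Rightarrow> bool" where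
  "commutative_family X f \<longleftrightarrow> (\<forall>i\<ge>1. \<forall>j\<ge>1. \<forall>z\<in>X. f i (f j z) = f j (f i z))"

definition proximal :: "(nat \<Rightarrow> 'a::metric_space \<Rightarrow> 'a) \<Rightarrow> 'a \<Rightarrow> 'a \<Rightarrow> bool" where
  "proximal f x y \<longleftrightarrow>
     liminf (\<lambda>n. ereal (dist (omega f n x) (omega f n y))) = 0"

definition proximal_trunc :: "(nat \<Rightarrow> 'a::metric_space \<Rightarrow> 'a) \<Rightarrow> nat \<Rightarrow> 'a \<Rightarrow> 'a \<Rightarrow> bool" where
  "proximal_trunc f k x y \<longleftrightarrow>
     liminf (\<lambda>n. ereal (dist (omega_from f k n x) (omega_from f k n y))) = 0"

end

theory Submission
  imports Defs
begin

lemma liminf_zero_iff: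
  fixes u :: "nat \<Rightarrow> real"
  assumes nn: "\<And>n. u n \<ge> 0"
  shows "liminf (\<lambda>n. ereal (u n)) = 0 \<longleftrightarrow> (\<forall>e>0. frequently (\<lambda>n. u n < e) sequentially)"
proof
  assume L: "liminf (\<lambda>n. ereal (u n)) = 0"
  show "\<forall>e>0. frequently (\<lambda>n. u n < e) sequentially"
  proof (intro allI impI, rule ccontr)
    fix e :: real assume e: "e > 0" and nf: "\<not> frequently (\<lambda>n. u n < e) sequentially"
    hence ev: "eventually (\<lambda>n. u n \<ge> e) sequentially"
      by (simp add: not_frequently not_less)
    have "ereal e \<le> liminf (\<lambda>n. ereal (u n))"
      unfolding le_Liminf_iff
    proof (intro allI impI)
      fix y assume "y < ereal e"
      show "eventually (\<lambda>n. y < ereal (u n)) sequentially"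
        using ev by eventually_elim (meson \<open>y < ereal e\<close> ereal_less_eq(3) less_le_trans)
    qed
    with L e show False by simp
  qed
next
  assume F: "\<forall>e>0. frequently (\<lambda>n. u n < e) sequentially"
  have ge: "0 \<le> liminf (\<lambda>n. ereal (u n))"
    unfolding le_Liminf_iff
  proof (intro allI impI)
    fix y :: ereal assume "y < 0"
    show "eventually (\<lambda>n. y < ereal (u n)) sequentially"
      using nn by (intro always_eventually allI) (rule less_le_trans[OF \<open>y < 0\<close>], simp)
  qed
  show "liminf (\<lambda>n. ereal (u n)) = 0"
  proof (rule ccontr)
    assume "liminf (\<lambda>n. ereal (u n)) \<noteq> 0"
    with ge have "0 < liminf (\<lambda>n. ereal (u n))" by simp
    then obtain r where r: "0 < ereal r" "ereal r < liminf (\<lambda>n. ereal (u n))"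
      using ereal_dense2 by blast
    have r0: "r > 0" using r by simp
    have "ereal r \<le> liminf (\<lambda>n. ereal (u n))" using r(2) by (rule less_imp_le)
    hence "\<forall>y<ereal r. eventually (\<lambda>n. y < ereal (u n)) sequentially"
      by (simp only: le_Liminf_iff)
    moreover have "ereal (r/2) < ereal r" using r0 by simp
    ultimately have "eventually (\<lambda>n. ereal (r/2) < ereal (u n)) sequentially" by blast
    hence ev2: "eventually (\<lambda>n. r/2 < u n) sequentially" by simp
    have "frequently (\<lambda>n. u n < r/2) sequentially" using F r0 half_gt_zero by blast
    from frequently_eventually_conj[OF this ev2] have "frequently (\<lambda>n. False) sequentially"
      by (rule frequently_elim1) auto
    thus False by simp
  qed
qed

lemma transfer_freq:
  fixes g :: "'a::metric_space \<Rightarrow> 'b::metric_space"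
  assumes uc: "uniformly_continuous_on X g"
    and inX: "\<And>n. a n \<in> X" "\<And>n. b n \<in> X"
    and eqa: "eventually (\<lambda>n. a' n = g (a n) \<and> b' n = g (b n)) sequentially"
    and F: "\<forall>e>0. frequently (\<lambda>n. dist (a n) (b n) < e) sequentially"
  shows "\<forall>e>0. frequently (\<lambda>n. dist (a' n) (b' n) < e) sequentially"
proof (intro allI impI)
  fix e :: real assume "e > 0"
  then obtain d where d: "d > 0" "\<And>x y. x \<in> X \<Longrightarrow> y \<in> X \<Longrightarrow> dist y x < d \<Longrightarrow> dist (g y) (g x) < e"
    using uc unfolding uniformly_continuous_on_def by metis
  have "frequently (\<lambda>n. dist (a n) (b n) < d) sequentially" using F d by simp
  from frequently_eventually_conj[OF this eqa]
  show "frequently (\<lambda>n. dist (a' n) (b' n) < e) sequentially"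
    by (rule frequently_elim1) (use d inX in \<open>auto simp: dist_commute\<close>)
qed

context
  fixes X :: "'a::metric_space set" and f :: "nat \<Rightarrow> 'a \<Rightarrow> 'a"
  assumes into: "\<And>n. n \<ge> 1 \<Longrightarrow> f n ` X \<subseteq> X"
begin

lemma omega_in: "z \<in> X \<Longrightarrow> omega f n z \<in> X"
  by (induction n) (use into in auto)

lemma omega_from_le: "n \<le> k \<Longrightarrow> omega_from f k n = id"
  by (induction n) auto

lemma omega_from_in: "z \<in> X \<Longrightarrow> omega_from f k n z \<in> X"
  by (induction n) (use into in auto)

lemma omega_comm:
  assumes c: "commutative_family X f" and j: "j \<ge> 1" and w: "w \<in> X"
  shows "f j (omega f k w) = omega f k (f j w)"
  using w
proof (induction k arbitrary: w)
  case 0 then show ?case by simp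
next
  case (Suc k)
  have "f j (omega f (Suc k) w) = f (Suc k) (f j (omega f k w))"
    using c j omega_in[OF Suc.prems] unfolding commutative_family_def by simp
  also have "\<dots> = omega f (Suc k) (f j w)" using Suc by simp
  finally show ?case .
qed

lemma omega_split:
  assumes c: "commutative_family X f" and z: "z \<in> X" and nk: "k \<le> n"
  shows "omega f n z = omega f k (omega_from f k n z)"
  using nk
proof (induction n)
  case 0 then show ?case by simp
next
  case (Suc n)
  show ?case
  proof (cases "Suc n \<le> k")
    case True
    hence "k = Suc n" using Suc.prems by simp
    thus ?thesis using omega_from_le[of "Suc n" k] by simp
  next
    case False
    hence kn: "k \<le> n" by simp
    have "omega f (Suc n) z = f (Suc n) (omega f k (omega_from f k n z))"
      using Suc.IH[OF kn] by simp
    also have "\<dots> = omega f k (f (Suc n) (omega_from f k n z))"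
      using omega_comm[OF c _ omega_from_in[OF z]] by simp
    also have "\<dots> = omega f k (omega_from f k (Suc n) z)" using False by simp
    finally show ?thesis .
  qed
qed

lemma omega_cont:
  assumes "\<And>n. n \<ge> 1 \<Longrightarrow> continuous_on X (f n)"
  shows "continuous_on X (omega f n)"
proof (induction n)
  case 0 then show ?case by (simp add: continuous_on_id)
next
  case (Suc n)
  have "continuous_on X (\<lambda>z. f (Suc n) (omega f n z))"
    by (rule continuous_on_compose2[OF assms[of "Suc n"] Suc.IH]) (use omega_in in auto)
  then show ?case by (simp add: comp_def)
qed

lemma omega_bij:
  assumes "\<forall>n\<ge>1. bij_betw (f n) X X"
  shows "bij_betw (omega f n) X X"
proof (induction n)
  case 0 then show ?case by (simp add: bij_betw_def)
next
  case (Suc n)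
  have "bij_betw (f (Suc n) \<circ> omega f n) X X"
    by (rule bij_betw_trans[OF Suc.IH]) (use assms in simp)
  then show ?case by (simp add: comp_def)
qed

end

theorem mainTheorem3:
  fixes X :: "'a::metric_space set" and f :: "nat \<Rightarrow> 'a \<Rightarrow> 'a" and k :: nat and x y :: 'a
  assumes "compact X"
    and "\<And>n. n \<ge> 1 \<Longrightarrow> continuous_on X (f n)"
    and "\<And>n. n \<ge> 1 \<Longrightarrow> f n ` X = X"
    and "x \<in> X" and "y \<in> X"
  shows "(commutative_family X f \<longrightarrow> proximal_trunc f k x y \<longrightarrow> proximal f x y)
       \<and> (commutative_family X f \<and> (\<forall>n\<ge>1. bij_betw (f n) X X)
            \<longrightarrow> proximal f x y \<longrightarrow> proximal_trunc f k x y)"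
proof -
  have into: "\<And>n. n \<ge> 1 \<Longrightarrow> f n ` X \<subseteq> X" using assms(3) by simp
  have cont: "continuous_on X (omega f k)"
    using omega_cont[where X=X and f=f, OF into assms(2)] by blast
  have uc: "uniformly_continuous_on X (omega f k)"
    using compact_uniformly_continuous[OF cont assms(1)] .
  have inx: "\<And>n. omega_from f k n x \<in> X" "\<And>n. omega_from f k n y \<in> X"
    using omega_from_in[where X=X and f=f, OF into] assms(4,5) by blast+
  have inx2: "\<And>n. omega f n x \<in> X" "\<And>n. omega f n y \<in> X"
    using omega_in[where X=X and f=f, OF into] assms(4,5) by blast+
  have P1: "proximal f x y" if c: "commutative_family X f" and p: "proximal_trunc f k x y"
  proof -
    have ev: "eventually (\<lambda>n. omega f n x = omega f k (omega_from f k n x)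
                \<and> omega f n y = omega f k (omega_from f k n y)) sequentially"
      using eventually_ge_at_top[of k]
      by eventually_elim (intro conjI omega_split[where X=X and f=f and k=k, OF into c]; simp add: assms(4,5))
    have F: "\<forall>e>0. frequently (\<lambda>n. dist (omega_from f k n x) (omega_from f k n y) < e) sequentially"
      using p unfolding proximal_trunc_def
      using liminf_zero_iff[of "\<lambda>n. dist (omega_from f k n x) (omega_from f k n y)"] by simp
    show ?thesis using transfer_freq[OF uc inx ev F]
      unfolding proximal_def
      using liminf_zero_iff[of "\<lambda>n. dist (omega f n x) (omega f n y)"] by simp
  qed
  have P2: "proximal_trunc f k x y" if c: "commutative_family X f"
      and b: "\<forall>n\<ge>1. bij_betw (f n) X X" and p: "proximal f x y"
  proof -
    have bj: "bij_betw (omega f k) X X" using omega_bij[where X=X and f=f, OF into b] .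
    define g where "g = the_inv_into X (omega f k)"
    have gi: "\<forall>z\<in>X. g (omega f k z) = z"
      using bj unfolding g_def bij_betw_def by (simp add: the_inv_into_f_f)
    have "continuous_on (omega f k ` X) g"
      by (rule continuous_on_inv[OF cont assms(1) gi])
    hence "continuous_on X g" using bj by (simp add: bij_betw_def)
    hence ucg: "uniformly_continuous_on X g"
      using compact_uniformly_continuous[OF _ assms(1)] by blast
    have ev: "eventually (\<lambda>n. omega_from f k n x = g (omega f n x)
                \<and> omega_from f k n y = g (omega f n y)) sequentially"
      using eventually_ge_at_top[of k]
      by eventually_elim (simp add: omega_split[where X=X and f=f and k=k, OF into c assms(4)] omega_split[where X=X and f=f and k=k, OF into c assms(5)] gi inx)
    have F: "\<forall>e>0. frequently (\<lambda>n. dist (omega f n x) (omega f n y) < e) sequentially"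
      using p unfolding proximal_def
      using liminf_zero_iff[of "\<lambda>n. dist (omega f n x) (omega f n y)"] by simp
    show ?thesis using transfer_freq[OF ucg inx2 ev F]
      unfolding proximal_trunc_def
      using liminf_zero_iff[of "\<lambda>n. dist (omega_from f k n x) (omega_from f k n y)"] by simp
  qed
  show ?thesis using P1 P2 by blast
qed

end
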